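(* Let $(X,\mathscr B,\mu,T)$ be a measure-preserving system and fix the system of coefficients $c_S^n=2^{-n}$. Then $\sup_\alpha \operatorname{Asc}_\mu(X,\alpha,T)=h_\mu(X,T)$, where the supremum is over all finite measurable partitions $\alpha$ of $X$.
   Context: A measure-preserving system is a complete probability space $(X,\mathscr B,\mu)$ with a bijection $T:X\to X$ such that $T,T^{-1}$ are measurable and preserve $\mu$. Notation: $n^*=\{0,\dots,n-1\}$; for a finite measurable partition $\alpha$ and $S\subset n^*$, $\alpha_S=\bigvee_{i\in S}T^{-i}\alpha$ (trivial partition if $S=\emptyset$); $H_\mu(\alpha)=-\sum_{A\in\alpha}\mu(A)\log\mu(A)$. The measure-theoretic average sample complexity is $\operatorname{Asc}_\mu(X,\alpha,T)=\lim_{n\to\infty}\frac1n\sum_{S\subset n^*}c_S^nH_\mu(\alpha_S)$ (the limit exists). $h_\mu(X,T)$ denotes the usual Kolmogorov–Sinai entropy. *)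

theory Defs
  imports "HOL-Probability.Probability"
begin

definition mps :: "'a measure \<Rightarrow> ('a \<Rightarrow> 'a) \<Rightarrow> bool" where
  "mps M T \<longleftrightarrow> prob_space M \<and> complete_measure M \<and>
     bij_betw T (space M) (space M) \<and>
     T \<in> M \<rightarrow>\<^sub>M M \<and> inv_into (space M) T \<in> M \<rightarrow>\<^sub>M M \<and>
     distr M M T = M \<and> distr M M (inv_into (space M) T) = M"

definition fin_meas_partition :: "'a measure \<Rightarrow> 'a set set \<Rightarrow> bool" where
  "fin_meas_partition M \<alpha> \<longleftrightarrow> finite \<alpha> \<and> \<alpha> \<subseteq> sets M \<and> \<Union>\<alpha> = space M \<and>
     (\<forall>A\<in>\<alpha>. \<forall>B\<in>\<alpha>. A \<noteq> B \<longrightarrow> A \<inter> B = {})"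

text \<open>alpha_S = join over i in S of T^{-i} alpha; the trivial partition {X} if S is empty.\<close>
definition part_join :: "'a measure \<Rightarrow> ('a \<Rightarrow> 'a) \<Rightarrow> 'a set set \<Rightarrow> nat set \<Rightarrow> 'a set set" where
  "part_join M T \<alpha> S = {space M \<inter> (\<Inter>i\<in>S. (T ^^ i) -` (f i)) | f. \<forall>i\<in>S. f i \<in> \<alpha>}"

text \<open>Shannon entropy of a partition (natural logarithm; 0 log 0 = 0).\<close>
definition part_entropy :: "'a measure \<Rightarrow> 'a set set \<Rightarrow> real" where
  "part_entropy M \<alpha> = - (\<Sum>A\<in>\<alpha>. measure M A * ln (measure M A))"

definition Asc :: "'a measure \<Rightarrow> 'a set set \<Rightarrow> ('a \<Rightarrow> 'a) \<Rightarrow> real" where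
  "Asc M \<alpha> T = lim (\<lambda>n. (1 / real n) *
      (\<Sum>S\<in>Pow {..<n}. (1 / 2 ^ n) * part_entropy M (part_join M T \<alpha> S)))"

definition ks_entropy_part :: "'a measure \<Rightarrow> ('a \<Rightarrow> 'a) \<Rightarrow> 'a set set \<Rightarrow> real" where
  "ks_entropy_part M T \<alpha> = lim (\<lambda>n. part_entropy M (part_join M T \<alpha> {..<n}) / real n)"

definition ks_entropy :: "'a measure \<Rightarrow> ('a \<Rightarrow> 'a) \<Rightarrow> ereal" where
  "ks_entropy M T = (SUP \<alpha>\<in>{\<alpha>. fin_meas_partition M \<alpha>}. ereal (ks_entropy_part M T \<alpha>))"

end

theory Submission
  imports Defs
begin

lemma gibbs:
  fixes p :: "'i \<Rightarrow> 'j \<Rightarrow> real"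
  assumes I: "finite I" and J: "finite J" and nn: "\<And>i j. i\<in>I \<Longrightarrow> j\<in>J \<Longrightarrow> 0 \<le> p i j"
    and one: "(\<Sum>i\<in>I. \<Sum>j\<in>J. p i j) = 1"
  shows "(\<Sum>i\<in>I. (\<Sum>j\<in>J. p i j) * ln (\<Sum>j\<in>J. p i j)) + (\<Sum>j\<in>J. (\<Sum>i\<in>I. p i j) * ln (\<Sum>i\<in>I. p i j))
     \<le> (\<Sum>i\<in>I. \<Sum>j\<in>J. p i j * ln (p i j))"
proof -
  define P where "P i = (\<Sum>j\<in>J. p i j)" for i
  define Q where "Q j = (\<Sum>i\<in>I. p i j)" for j
  have key: "p i j * (ln (P i) + ln (Q j) - ln (p i j)) \<le> P i * Q j - p i j" if i: "i \<in> I" and j: "j \<in> J" for i j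
  proof (cases "p i j = 0")
    case True
    have "0 \<le> P i" unfolding P_def using nn i by (simp add: sum_nonneg)
    moreover have "0 \<le> Q j" unfolding Q_def using nn j by (simp add: sum_nonneg)
    ultimately show ?thesis using True by simp
  next
    case False
    hence pp: "0 < p i j" using nn[OF i j] by simp
    have "p i j \<le> P i" unfolding P_def using nn i j J by (intro member_le_sum) auto
    hence Pp: "0 < P i" using pp by simp
    have "p i j \<le> Q j" unfolding Q_def using nn i j I by (intro member_le_sum) auto
    hence Qp: "0 < Q j" using pp by simp
    have "ln (P i) + ln (Q j) - ln (p i j) = ln (P i * Q j / p i j)"
      using Pp Qp pp by (simp add: ln_mult ln_div)
    also have "\<dots> \<le> P i * Q j / p i j - 1" using Pp Qp pp by (intro ln_le_minus_one) simp
    finally have "p i j * (ln (P i) + ln (Q j) - ln (p i j)) \<le> p i j * (P i * Q j / p i j - 1)"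
      using pp by (simp add: mult_left_mono)
    also have "\<dots> = P i * Q j - p i j" using pp by (simp add: field_simps)
    finally show ?thesis .
  qed
  have sP: "(\<Sum>i\<in>I. P i) = 1" using one unfolding P_def .
  have sQ: "(\<Sum>j\<in>J. Q j) = 1" using one unfolding Q_def by (subst sum.swap) simp
  have "(\<Sum>i\<in>I. \<Sum>j\<in>J. p i j * (ln (P i) + ln (Q j) - ln (p i j))) \<le> (\<Sum>i\<in>I. \<Sum>j\<in>J. P i * Q j - p i j)"
    using key by (intro sum_mono) auto
  also have "\<dots> = (\<Sum>i\<in>I. P i) * (\<Sum>j\<in>J. Q j) - 1"
    using one by (simp add: sum_subtractf sum_product)
  also have "\<dots> = 0" using sP sQ by simp
  finally have A: "(\<Sum>i\<in>I. \<Sum>j\<in>J. p i j * (ln (P i) + ln (Q j) - ln (p i j))) \<le> 0" .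
  have B: "(\<Sum>i\<in>I. \<Sum>j\<in>J. p i j * (ln (P i) + ln (Q j) - ln (p i j))) =
     (\<Sum>i\<in>I. P i * ln (P i)) + (\<Sum>j\<in>J. Q j * ln (Q j)) - (\<Sum>i\<in>I. \<Sum>j\<in>J. p i j * ln (p i j))"
  proof -
    have "(\<Sum>i\<in>I. \<Sum>j\<in>J. p i j * (ln (P i) + ln (Q j) - ln (p i j))) =
      (\<Sum>i\<in>I. \<Sum>j\<in>J. p i j * ln (P i)) + (\<Sum>i\<in>I. \<Sum>j\<in>J. p i j * ln (Q j)) - (\<Sum>i\<in>I. \<Sum>j\<in>J. p i j * ln (p i j))"
      by (simp add: algebra_simps sum.distrib sum_subtractf)
    also have "(\<Sum>i\<in>I. \<Sum>j\<in>J. p i j * ln (P i)) = (\<Sum>i\<in>I. P i * ln (P i))"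
      unfolding P_def by (simp add: sum_distrib_right)
    also have "(\<Sum>i\<in>I. \<Sum>j\<in>J. p i j * ln (Q j)) = (\<Sum>j\<in>J. Q j * ln (Q j))"
      unfolding Q_def by (subst sum.swap) (simp add: sum_distrib_right)
    finally show ?thesis .
  qed
  show ?thesis using A B unfolding P_def Q_def by linarith
qed


lemma subadd_mult:
  fixes a :: "nat \<Rightarrow> real"
  assumes sub: "\<And>m n. a (m+n) \<le> a m + a n"
  shows "a (q*m + r) \<le> real q * a m + a r"
proof (induction q)
  case 0 thus ?case by simp
next
  case (Suc q)
  have "a (Suc q * m + r) = a (m + (q*m + r))" by (simp add: algebra_simps)
  also have "\<dots> \<le> a m + a (q*m + r)" by (rule sub)
  also have "\<dots> \<le> a m + (real q * a m + a r)" using Suc by simp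
  finally show ?case by (simp add: algebra_simps)
qed

lemma fekete:
  fixes a :: "nat \<Rightarrow> real"
  assumes nn: "\<And>n. 0 \<le> a n" and sub: "\<And>m n. a (m+n) \<le> a m + a n"
  shows "convergent (\<lambda>n. a n / real n)"
proof -
  define L where "L = (INF n\<in>{1..}. a n / real n)"
  have bdd: "bdd_below ((\<lambda>n. a n / real n) ` {1..})"
    using nn by (intro bdd_belowI[of _ 0]) auto
  have low: "L \<le> a n / real n" if "n \<ge> 1" for n
    unfolding L_def using bdd that by (intro cINF_lower) auto
  have "(\<lambda>n. a n / real n) \<longlonglongrightarrow> L"
  proof (rule LIMSEQ_I)
    fix r :: real assume r: "0 < r"
    have "Inf ((\<lambda>n. a n / real n) ` {1..}) < L + r/2" unfolding L_def using r by simp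
    then obtain m where m: "m \<ge> 1" "a m / real m < L + r/2"
      using cInf_lessD[of "(\<lambda>n. a n / real n) ` {1..}" "L + r/2"] by auto
    define C where "C = (\<Sum>i<m. a i)"
    have C0: "0 \<le> C" unfolding C_def using nn by (simp add: sum_nonneg)
    have aC: "a i \<le> C" if "i < m" for i
      unfolding C_def using that nn by (intro member_le_sum) auto
    obtain N :: nat where N: "2 * C / r < real N" using reals_Archimedean2 by blast
    show "\<exists>no. \<forall>n\<ge>no. norm (a n / real n - L) < r"
    proof (intro exI allI impI)
      fix n assume n: "n \<ge> Suc N"
      hence n1: "n \<ge> 1" and npos: "0 < real n" by auto
      define q where "q = n div m"
      define s where "s = n mod m"
      have ns: "n = q * m + s" unfolding q_def s_def by simp
      have s: "s < m" unfolding s_def using m by simp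
      have "a n \<le> real q * a m + a s" unfolding ns by (rule subadd_mult[OF sub])
      also have "\<dots> \<le> real q * a m + C" using aC[OF s] by simp
      finally have an: "a n \<le> real q * a m + C" .
      have qm: "real q * real m \<le> real n" using ns by (metis le_add1 of_nat_le_iff of_nat_mult)
      have "real q * a m = (real q * real m) * (a m / real m)" using m by simp
      also have "\<dots> \<le> real n * (a m / real m)" using qm nn[of m] m by (intro mult_right_mono) auto
      finally have "a n \<le> real n * (a m / real m) + C" using an by simp
      hence le1: "a n / real n \<le> a m / real m + C / real n" using npos by (simp add: field_simps)
      have cn: "C / real n < r / 2"
      proof -
        have "2 * C / r < real n" using N n by simp
        hence "2 * C < r * real n" using r by (simp add: field_simps)
        thus ?thesis using npos by (simp add: field_simps)
      qed
      have up: "a n / real n < L + r" using le1 cn m(2) by linarith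
      have "L \<le> a n / real n" using low n1 .
      thus "norm (a n / real n - L) < r" using up r by simp
    qed
  qed
  thus ?thesis by (rule convergentI)
qed


lemma card_filter_sum:
  assumes "finite A"
  shows "real (card {x\<in>A. Q x}) = (\<Sum>x\<in>A. if Q x then 1 else (0::real))"
proof -
  have "(\<Sum>x\<in>A. if Q x then 1 else (0::real)) = (\<Sum>x\<in>{x\<in>A. Q x}. 1)"
    by (rule sum.inter_filter[symmetric, OF assms])
  thus ?thesis by simp
qed

lemma count_one:
  assumes i: "k \<le> i" "i < n"
  shows "card {S\<in>Pow {..<n}. i \<notin> (\<lambda>(a,b). a + b) ` (S \<times> {..<k})} \<le> 2 ^ (n - k)"
proof -
  define W where "W = {i+1-k..i}"
  have sub: "{S\<in>Pow {..<n}. i \<notin> (\<lambda>(a,b). a + b) ` (S \<times> {..<k})} \<subseteq> Pow ({..<n} - W)"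
  proof
    fix S assume S: "S \<in> {S\<in>Pow {..<n}. i \<notin> (\<lambda>(a,b). a + b) ` (S \<times> {..<k})}"
    have "s \<notin> W" if s: "s \<in> S" for s
    proof
      assume sW: "s \<in> W"
      hence "i + 1 - k \<le> s" "s \<le> i" unfolding W_def by auto
      hence "i - s < k" "i = s + (i - s)" using i by auto
      hence "i \<in> (\<lambda>(a,b). a + b) ` (S \<times> {..<k})" using s by (intro image_eqI[of _ _ "(s, i - s)"]) auto
      thus False using S by simp
    qed
    thus "S \<in> Pow ({..<n} - W)" using S by auto
  qed
  have cW: "card W = k" unfolding W_def using i by simp
  have Wsub: "W \<subseteq> {..<n}" unfolding W_def using i by auto
  have "card {S\<in>Pow {..<n}. i \<notin> (\<lambda>(a,b). a + b) ` (S \<times> {..<k})} \<le> card (Pow ({..<n} - W))"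
    using sub by (intro card_mono) auto
  also have "\<dots> = 2 ^ card ({..<n} - W)" by (simp add: card_Pow)
  also have "card ({..<n} - W) = n - k" using Wsub cW by (simp add: card_Diff_subset W_def)
  finally show ?thesis .
qed

lemma count_bound:
  "(\<Sum>S\<in>Pow {..<n}. real (card ({..<n} - (\<lambda>(a,b). a + b) ` (S \<times> {..<k})))) \<le> real k * 2^n + real n * 2^n / 2^k"
proof -
  let ?P = "\<lambda>S. (\<lambda>(a,b). a + b) ` (S \<times> {..<k})"
  have "(\<Sum>S\<in>Pow {..<n}. real (card ({..<n} - ?P S))) = (\<Sum>S\<in>Pow {..<n}. \<Sum>i\<in>{..<n}. if i \<notin> ?P S then 1 else (0::real))"
  proof (rule sum.cong[OF refl])
    fix S
    have "{..<n} - ?P S = {i\<in>{..<n}. i \<notin> ?P S}" by auto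
    thus "real (card ({..<n} - ?P S)) = (\<Sum>i\<in>{..<n}. if i \<notin> ?P S then 1 else (0::real))"
      using card_filter_sum[of "{..<n}" "\<lambda>i. i \<notin> ?P S"] by simp
  qed
  also have "\<dots> = (\<Sum>i\<in>{..<n}. \<Sum>S\<in>Pow {..<n}. if i \<notin> ?P S then 1 else (0::real))" by (rule sum.swap)
  also have "\<dots> = (\<Sum>i\<in>{..<n}. real (card {S\<in>Pow {..<n}. i \<notin> ?P S}))"
    by (intro sum.cong refl card_filter_sum[symmetric]) simp
  also have "\<dots> \<le> (\<Sum>i\<in>{..<n}. (if i < k then 2^n else 0) + 2^n / 2^k)"
  proof (rule sum_mono)
    fix i assume i: "i \<in> {..<n}"
    have c1: "card {S\<in>Pow {..<n}. i \<notin> ?P S} \<le> 2^n"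
    proof -
      have "card {S\<in>Pow {..<n}. i \<notin> ?P S} \<le> card (Pow {..<n})" by (intro card_mono) auto
      thus ?thesis by (simp add: card_Pow)
    qed
    show "real (card {S\<in>Pow {..<n}. i \<notin> ?P S}) \<le> (if i < k then 2^n else 0) + 2^n / 2^k"
    proof (cases "i < k")
      case True
      have r0: "real (card {S\<in>Pow {..<n}. i \<notin> ?P S}) \<le> real (2^n)" using c1
        by (simp only: of_nat_le_iff)
      have r1: "real (card {S\<in>Pow {..<n}. i \<notin> ?P S}) \<le> 2^n" using r0 by simp
      have r2: "(0::real) \<le> 2^n / 2^k" by simp
      have r3: "(if i < k then (2::real)^n else 0) = 2^n" using True by simp
      show ?thesis unfolding r3 using r1 r2 by linarith
    next
      case False
      have ki: "k \<le> i" "i < n" using False i by auto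
      have "card {S\<in>Pow {..<n}. i \<notin> ?P S} \<le> 2^(n-k)" by (rule count_one[OF ki])
      hence "real (card {S\<in>Pow {..<n}. i \<notin> ?P S}) \<le> real (2^(n-k))"
        by (simp only: of_nat_le_iff)
      also have "real (2^(n-k)) = (2::real)^(n-k)" by simp
      also have "\<dots> = 2^n / 2^k" using ki by (intro power_diff) auto
      finally show ?thesis using False by simp
    qed
  qed
  also have "\<dots> = (\<Sum>i\<in>{..<n}. if i < k then 2^n else 0) + real n * 2^n / 2^k"
    by (simp add: sum.distrib)
  also have "(\<Sum>i\<in>{..<n}. if i < k then (2::real)^n else 0) = (\<Sum>i\<in>{..<n} \<inter> {..<k}. 2^n)"
  proof -
    have "(\<Sum>i\<in>{..<n} \<inter> {..<k}. (2::real)^n) = (\<Sum>i\<in>{..<n}. if i \<in> {..<k} then 2^n else 0)"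
      by (rule sum.inter_restrict) simp
    thus ?thesis by simp
  qed
  also have "\<dots> = real (card ({..<n} \<inter> {..<k})) * 2^n" by simp
  also have "\<dots> \<le> real k * 2^n"
  proof -
    have "card ({..<n} \<inter> {..<k}) \<le> card {..<k}" by (intro card_mono) auto
    thus ?thesis by simp
  qed
  finally show ?thesis by simp
qed


definition refines :: "'a set set \<Rightarrow> 'a set set \<Rightarrow> bool" where
  "refines \<gamma> \<beta> \<longleftrightarrow> (\<forall>C\<in>\<gamma>. \<forall>B\<in>\<beta>. B \<inter> C \<noteq> {} \<longrightarrow> C \<subseteq> B)"

definition pjoin :: "'a set set \<Rightarrow> 'a set set \<Rightarrow> 'a set set" where
  "pjoin \<beta> \<gamma> = (\<lambda>(B,C). B \<inter> C) ` (\<beta> \<times> \<gamma>)"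

lemma part_sum:
  assumes "prob_space M" "fin_meas_partition M \<gamma>" "A \<in> sets M"
  shows "measure M A = (\<Sum>C\<in>\<gamma>. measure M (A \<inter> C))"
proof -
  interpret prob_space M by fact
  have As: "A \<subseteq> space M" using assms(3) by (rule sets.sets_into_space)
  have U: "\<Union>\<gamma> = space M" and fin: "finite \<gamma>" and sub: "\<gamma> \<subseteq> sets M"
    and dis: "\<forall>A\<in>\<gamma>. \<forall>B\<in>\<gamma>. A \<noteq> B \<longrightarrow> A \<inter> B = {}"
    using assms(2) unfolding fin_meas_partition_def by auto
  have "A = A \<inter> \<Union>\<gamma>" using As U by (simp add: Int_absorb2)
  also have "\<dots> = (\<Union>C\<in>\<gamma>. A \<inter> C)" by (rule Int_Union)
  finally have "A = (\<Union>C\<in>\<gamma>. A \<inter> C)" .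
  moreover have "measure M (\<Union>C\<in>\<gamma>. A \<inter> C) = (\<Sum>C\<in>\<gamma>. measure M (A \<inter> C))"
  proof (rule finite_measure_finite_Union)
    show "finite \<gamma>" by fact
    show "(\<lambda>C. A \<inter> C) ` \<gamma> \<subseteq> sets M" using sub assms(3) by auto
    show "disjoint_family_on (\<lambda>C. A \<inter> C) \<gamma>" unfolding disjoint_family_on_def using dis by blast
  qed
  ultimately show ?thesis by simp
qed

lemma ent_nonneg: assumes "prob_space M" shows "0 \<le> part_entropy M \<beta>"
proof -
  have "measure M A * ln (measure M A) \<le> 0" for A
  proof (cases "measure M A = 0")
    case False
    have "measure M A \<le> 1" using prob_space.prob_le_1[OF assms] .
    moreover have "0 < measure M A" using False measure_nonneg[of M A] by linarith
    ultimately have "ln (measure M A) \<le> 0" by simp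
    thus ?thesis by (simp add: measure_nonneg mult_nonneg_nonpos)
  qed simp
  thus ?thesis unfolding part_entropy_def by (simp add: sum_nonpos)
qed

lemma ent_mono:
  assumes P: "prob_space M" and b: "fin_meas_partition M \<beta>" and c: "fin_meas_partition M \<gamma>"
    and r: "refines \<gamma> \<beta>"
  shows "part_entropy M \<beta> \<le> part_entropy M \<gamma>"
proof -
  interpret prob_space M by fact
  have "(\<Sum>C\<in>\<gamma>. measure M C * ln (measure M C)) = (\<Sum>C\<in>\<gamma>. \<Sum>B\<in>\<beta>. measure M (C \<inter> B) * ln (measure M C))"
  proof (rule sum.cong[OF refl])
    fix C assume "C \<in> \<gamma>"
    hence "C \<in> sets M" using c unfolding fin_meas_partition_def by auto
    thus "measure M C * ln (measure M C) = (\<Sum>B\<in>\<beta>. measure M (C \<inter> B) * ln (measure M C))"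
      using part_sum[OF P b] by (simp add: sum_distrib_right)
  qed
  also have "\<dots> \<le> (\<Sum>C\<in>\<gamma>. \<Sum>B\<in>\<beta>. measure M (C \<inter> B) * ln (measure M B))"
  proof (intro sum_mono)
    fix C B assume C: "C \<in> \<gamma>" and B: "B \<in> \<beta>"
    show "measure M (C \<inter> B) * ln (measure M C) \<le> measure M (C \<inter> B) * ln (measure M B)"
    proof (cases "B \<inter> C = {}")
      case True thus ?thesis by (simp add: Int_commute)
    next
      case False
      hence sub: "C \<subseteq> B" using r C B unfolding refines_def by auto
      hence eq: "C \<inter> B = C" by auto
      show ?thesis
      proof (cases "measure M C = 0")
        case False
        have "measure M C \<le> measure M B"
          using sub B b unfolding fin_meas_partition_def by (intro finite_measure_mono) auto
        moreover have "0 < measure M C" using False measure_nonneg[of M C] by linarith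
        ultimately have "ln (measure M C) \<le> ln (measure M B)" by simp
        thus ?thesis unfolding eq by (simp add: mult_left_mono)
      qed (simp add: eq)
    qed
  qed
  also have "\<dots> = (\<Sum>B\<in>\<beta>. \<Sum>C\<in>\<gamma>. measure M (B \<inter> C) * ln (measure M B))"
    by (subst sum.swap) (simp add: Int_commute)
  also have "\<dots> = (\<Sum>B\<in>\<beta>. measure M B * ln (measure M B))"
  proof (rule sum.cong[OF refl])
    fix B assume "B \<in> \<beta>"
    hence "B \<in> sets M" using b unfolding fin_meas_partition_def by auto
    thus "(\<Sum>C\<in>\<gamma>. measure M (B \<inter> C) * ln (measure M B)) = measure M B * ln (measure M B)"
      using part_sum[OF P c] by (simp add: sum_distrib_right)
  qed
  finally show ?thesis unfolding part_entropy_def by simp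
qed

lemma pjoin_part:
  assumes b: "fin_meas_partition M \<beta>" and c: "fin_meas_partition M \<gamma>"
  shows "fin_meas_partition M (pjoin \<beta> \<gamma>)"
  unfolding fin_meas_partition_def
proof (intro conjI ballI impI)
  show "finite (pjoin \<beta> \<gamma>)" using b c unfolding fin_meas_partition_def pjoin_def by simp
  show "pjoin \<beta> \<gamma> \<subseteq> sets M" using b c unfolding fin_meas_partition_def pjoin_def by auto
  show "\<Union> (pjoin \<beta> \<gamma>) = space M"
  proof
    show "\<Union> (pjoin \<beta> \<gamma>) \<subseteq> space M" using b unfolding fin_meas_partition_def pjoin_def by auto
    show "space M \<subseteq> \<Union> (pjoin \<beta> \<gamma>)"
    proof
      fix x assume x: "x \<in> space M"
      have "x \<in> \<Union>\<beta>" "x \<in> \<Union>\<gamma>" using b c x unfolding fin_meas_partition_def by simp_all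
      then obtain B C where BC: "B \<in> \<beta>" "x \<in> B" "C \<in> \<gamma>" "x \<in> C" by blast
      have "B \<inter> C \<in> pjoin \<beta> \<gamma>" unfolding pjoin_def using BC by (intro image_eqI[of _ _ "(B,C)"]) auto
      thus "x \<in> \<Union> (pjoin \<beta> \<gamma>)" using BC by blast
    qed
  qed
  fix A A' assume "A \<in> pjoin \<beta> \<gamma>" "A' \<in> pjoin \<beta> \<gamma>" "A \<noteq> A'"
  then obtain B C B' C' where in4: "B \<in> \<beta>" "C \<in> \<gamma>" "B' \<in> \<beta>" "C' \<in> \<gamma>" and AA: "A = B \<inter> C" "A' = B' \<inter> C'"
    and ne: "B \<noteq> B' \<or> C \<noteq> C'" unfolding pjoin_def by auto
  have db: "\<forall>A\<in>\<beta>. \<forall>B\<in>\<beta>. A \<noteq> B \<longrightarrow> A \<inter> B = {}" and dc: "\<forall>A\<in>\<gamma>. \<forall>B\<in>\<gamma>. A \<noteq> B \<longrightarrow> A \<inter> B = {}"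
    using b c unfolding fin_meas_partition_def by auto
  show "A \<inter> A' = {}"
  proof (cases "B = B'")
    case True
    hence "C \<inter> C' = {}" using ne dc in4 by auto
    thus ?thesis unfolding AA by auto
  next
    case False
    hence "B \<inter> B' = {}" using db in4 by auto
    thus ?thesis unfolding AA by auto
  qed
qed


lemma ent_join:
  assumes P: "prob_space M" and b: "fin_meas_partition M \<beta>" and c: "fin_meas_partition M \<gamma>"
  shows "part_entropy M (pjoin \<beta> \<gamma>) \<le> part_entropy M \<beta> + part_entropy M \<gamma>"
proof -
  interpret prob_space M by fact
  have fb: "finite \<beta>" and fc: "finite \<gamma>" using b c unfolding fin_meas_partition_def by auto
  have db: "\<forall>A\<in>\<beta>. \<forall>B\<in>\<beta>. A \<noteq> B \<longrightarrow> A \<inter> B = {}" and dc: "\<forall>A\<in>\<gamma>. \<forall>B\<in>\<gamma>. A \<noteq> B \<longrightarrow> A \<inter> B = {}"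
    using b c unfolding fin_meas_partition_def by auto
  define h where "h A = measure M A * ln (measure M A)" for A
  have "(\<Sum>A\<in>pjoin \<beta> \<gamma>. h A) = (\<Sum>x\<in>\<beta>\<times>\<gamma>. h (case x of (B,C) \<Rightarrow> B \<inter> C))"
    unfolding pjoin_def
  proof (subst sum.reindex_nontrivial)
    show "finite (\<beta> \<times> \<gamma>)" using fb fc by simp
    fix x y assume xy: "x \<in> \<beta> \<times> \<gamma>" "y \<in> \<beta> \<times> \<gamma>" "x \<noteq> y" and eq: "(case x of (B, C) \<Rightarrow> B \<inter> C) = (case y of (B, C) \<Rightarrow> B \<inter> C)"
    obtain B C B' C' where x: "x = (B,C)" and y: "y = (B',C')" by (cases x, cases y) auto
    have in4: "B \<in> \<beta>" "C \<in> \<gamma>" "B' \<in> \<beta>" "C' \<in> \<gamma>" using xy x y by auto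
    have eq': "B \<inter> C = B' \<inter> C'" using eq x y by simp
    have "B \<inter> C = {}"
    proof (cases "B = B'")
      case True
      hence "C \<noteq> C'" using xy x y by auto
      hence "C \<inter> C' = {}" using dc in4 by auto
      thus ?thesis using eq' by blast
    next
      case False
      hence "B \<inter> B' = {}" using db in4 by auto
      thus ?thesis using eq' by blast
    qed
    thus "h (case x of (B, C) \<Rightarrow> B \<inter> C) = 0" using x by (simp add: h_def)
  qed (simp add: comp_def)
  also have "\<dots> = (\<Sum>B\<in>\<beta>. \<Sum>C\<in>\<gamma>. h (B \<inter> C))" by (simp add: sum.cartesian_product split_beta)
  finally have j: "(\<Sum>A\<in>pjoin \<beta> \<gamma>. h A) = (\<Sum>B\<in>\<beta>. \<Sum>C\<in>\<gamma>. h (B \<inter> C))" .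
  have mb: "B \<in> sets M" if "B \<in> \<beta>" for B using b that unfolding fin_meas_partition_def by auto
  have mc: "C \<in> sets M" if "C \<in> \<gamma>" for C using c that unfolding fin_meas_partition_def by auto
  have PB: "(\<Sum>C\<in>\<gamma>. measure M (B \<inter> C)) = measure M B" if "B \<in> \<beta>" for B
    using part_sum[OF P c mb[OF that]] by simp
  have QC: "(\<Sum>B\<in>\<beta>. measure M (B \<inter> C)) = measure M C" if "C \<in> \<gamma>" for C
  proof -
    have "measure M C = (\<Sum>B\<in>\<beta>. measure M (C \<inter> B))" using part_sum[OF P b mc[OF that]] .
    thus ?thesis by (simp add: Int_commute)
  qed
  have one: "(\<Sum>B\<in>\<beta>. \<Sum>C\<in>\<gamma>. measure M (B \<inter> C)) = 1"
  proof -
    have "(\<Sum>B\<in>\<beta>. \<Sum>C\<in>\<gamma>. measure M (B \<inter> C)) = (\<Sum>B\<in>\<beta>. measure M B)" using PB by simp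
    also have "\<dots> = (\<Sum>B\<in>\<beta>. measure M (space M \<inter> B))"
      using mb sets.sets_into_space by (intro sum.cong refl) (simp add: Int_absorb1)
    also have "\<dots> = measure M (space M)" using part_sum[OF P b sets.top] by simp
    finally show ?thesis by (simp add: prob_space)
  qed
  have g: "(\<Sum>B\<in>\<beta>. (\<Sum>C\<in>\<gamma>. measure M (B \<inter> C)) * ln (\<Sum>C\<in>\<gamma>. measure M (B \<inter> C))) +
       (\<Sum>C\<in>\<gamma>. (\<Sum>B\<in>\<beta>. measure M (B \<inter> C)) * ln (\<Sum>B\<in>\<beta>. measure M (B \<inter> C)))
     \<le> (\<Sum>B\<in>\<beta>. \<Sum>C\<in>\<gamma>. measure M (B \<inter> C) * ln (measure M (B \<inter> C)))"
    by (rule gibbs[OF fb fc _ one]) simp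
  have e1: "(\<Sum>B\<in>\<beta>. (\<Sum>C\<in>\<gamma>. measure M (B \<inter> C)) * ln (\<Sum>C\<in>\<gamma>. measure M (B \<inter> C))) = (\<Sum>B\<in>\<beta>. h B)"
    using PB by (intro sum.cong refl) (simp add: h_def)
  have e2: "(\<Sum>C\<in>\<gamma>. (\<Sum>B\<in>\<beta>. measure M (B \<inter> C)) * ln (\<Sum>B\<in>\<beta>. measure M (B \<inter> C))) = (\<Sum>C\<in>\<gamma>. h C)"
    using QC by (intro sum.cong refl) (simp add: h_def)
  have "(\<Sum>B\<in>\<beta>. h B) + (\<Sum>C\<in>\<gamma>. h C) \<le> (\<Sum>A\<in>pjoin \<beta> \<gamma>. h A)"
    using g e1 e2 j unfolding h_def by linarith
  thus ?thesis unfolding part_entropy_def h_def by simp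
qed


locale mpsys =
  fixes M :: "'a measure" and T :: "'a \<Rightarrow> 'a"
  assumes mps: "mps M T"
begin

lemma P: "prob_space M" using mps unfolding mps_def by simp
lemma Tm: "T \<in> M \<rightarrow>\<^sub>M M" using mps unfolding mps_def by simp
lemma Tn: "(T^^n) \<in> M \<rightarrow>\<^sub>M M" using Tm by (rule measurable_compose_n)
lemma Tsp: "x \<in> space M \<Longrightarrow> (T^^n) x \<in> space M" by (rule measurable_space[OF Tn])
lemma Tbij: "bij_betw (T^^n) (space M) (space M)"
  using mps unfolding mps_def by (intro bij_betw_funpow) simp

lemma meas_pres: "A \<in> sets M \<Longrightarrow> measure M ((T^^n) -` A \<inter> space M) = measure M A"
proof (induction n arbitrary: A)
  case 0 thus ?case using sets.sets_into_space by (simp add: Int_absorb2)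
next
  case (Suc n)
  have sub: "(T^^n) -` A \<inter> space M \<in> sets M" using Tn Suc.prems by (rule measurable_sets)
  have "(T^^Suc n) -` A \<inter> space M = T -` ((T^^n) -` A \<inter> space M) \<inter> space M"
    using Tsp[of _ 1] by (auto simp: funpow_swap1)
  hence "measure M ((T^^Suc n) -` A \<inter> space M) = measure (distr M M T) ((T^^n) -` A \<inter> space M)"
    using Tm sub by (simp add: measure_distr)
  also have "distr M M T = M" using mps unfolding mps_def by simp
  finally show ?case using Suc.IH[OF Suc.prems] by simp
qed

lemma pj_elem:
  assumes "A \<in> part_join M T \<gamma> S"
  obtains f where "\<forall>i\<in>S. f i \<in> \<gamma>" "A = space M \<inter> (\<Inter>i\<in>S. (T ^^ i) -` f i)"
  using assms unfolding part_join_def by blast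

lemma pj_intro:
  assumes "\<forall>i\<in>S. f i \<in> \<gamma>"
  shows "space M \<inter> (\<Inter>i\<in>S. (T ^^ i) -` f i) \<in> part_join M T \<gamma> S"
  using assms unfolding part_join_def by blast

lemma same_block:
  assumes "A \<in> part_join M T \<gamma> S" "x \<in> A" "y \<in> A" "i \<in> S"
  shows "\<exists>B\<in>\<gamma>. (T^^i) x \<in> B \<and> (T^^i) y \<in> B"
  using assms by (elim pj_elem) auto

lemma cell:
  assumes a: "fin_meas_partition M \<alpha>" and A: "A \<in> part_join M T \<alpha> S" and x: "x \<in> A" and y: "y \<in> space M"
    and sb: "\<forall>i\<in>S. \<exists>B\<in>\<alpha>. (T^^i) x \<in> B \<and> (T^^i) y \<in> B"
  shows "y \<in> A"
proof -
  obtain f where f: "\<forall>i\<in>S. f i \<in> \<alpha>" and Af: "A = space M \<inter> (\<Inter>i\<in>S. (T ^^ i) -` f i)"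
    using A by (rule pj_elem)
  have dis: "\<forall>A\<in>\<alpha>. \<forall>B\<in>\<alpha>. A \<noteq> B \<longrightarrow> A \<inter> B = {}" using a unfolding fin_meas_partition_def by auto
  have "(T^^i) y \<in> f i" if i: "i \<in> S" for i
  proof -
    obtain B where B: "B \<in> \<alpha>" "(T^^i) x \<in> B" "(T^^i) y \<in> B" using sb i by blast
    have "(T^^i) x \<in> f i" using x i Af by auto
    hence "B = f i" using dis B f i by blast
    thus ?thesis using B by simp
  qed
  thus ?thesis using y Af by auto
qed

lemma pj_part:
  assumes a: "fin_meas_partition M \<alpha>" and S: "finite S"
  shows "fin_meas_partition M (part_join M T \<alpha> S)"
proof -
  have fa: "finite \<alpha>" and sa: "\<alpha> \<subseteq> sets M" and Ua: "\<Union>\<alpha> = space M"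
    and dis: "\<forall>A\<in>\<alpha>. \<forall>B\<in>\<alpha>. A \<noteq> B \<longrightarrow> A \<inter> B = {}"
    using a unfolding fin_meas_partition_def by auto
  define E where "E f = space M \<inter> (\<Inter>i\<in>S. (T ^^ i) -` f i)" for f :: "nat \<Rightarrow> 'a set"
  have pjE: "part_join M T \<alpha> S = E ` {f. \<forall>i\<in>S. f i \<in> \<alpha>}"
    unfolding part_join_def E_def by auto
  have Er: "E (restrict f S) = E f" for f unfolding E_def by auto
  have "part_join M T \<alpha> S \<subseteq> E ` (PiE S (\<lambda>_. \<alpha>))"
  proof
    fix A assume "A \<in> part_join M T \<alpha> S"
    then obtain f where f: "\<forall>i\<in>S. f i \<in> \<alpha>" "A = E f" unfolding pjE by auto
    have "restrict f S \<in> PiE S (\<lambda>_. \<alpha>)" using f by auto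
    thus "A \<in> E ` (PiE S (\<lambda>_. \<alpha>))" using f Er by (metis image_eqI)
  qed
  moreover have "finite (E ` (PiE S (\<lambda>_. \<alpha>)))" using S fa by (intro finite_imageI finite_PiE) auto
  ultimately have fin: "finite (part_join M T \<alpha> S)" by (rule finite_subset)
  have meas: "E f \<in> sets M" if f: "\<forall>i\<in>S. f i \<in> \<alpha>" for f
  proof (cases "S = {}")
    case True thus ?thesis unfolding E_def by simp
  next
    case False
    have "E f = (\<Inter>i\<in>S. (T ^^ i) -` f i \<inter> space M)" unfolding E_def using False by auto
    also have "\<dots> \<in> sets M"
      using S False f sa by (intro sets.finite_INT measurable_sets[OF Tn]) auto
    finally show ?thesis .
  qed
  have cover: "space M \<subseteq> \<Union>(part_join M T \<alpha> S)"
  proof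
    fix x assume x: "x \<in> space M"
    define f where "f i = (SOME B. B \<in> \<alpha> \<and> (T^^i) x \<in> B)" for i
    have "\<exists>B. B \<in> \<alpha> \<and> (T^^i) x \<in> B" for i using Tsp[OF x, of i] Ua by blast
    hence f: "f i \<in> \<alpha> \<and> (T^^i) x \<in> f i" for i unfolding f_def by (rule someI_ex)
    have "E f \<in> part_join M T \<alpha> S" unfolding pjE using f by auto
    moreover have "x \<in> E f" unfolding E_def using x f by auto
    ultimately show "x \<in> \<Union>(part_join M T \<alpha> S)" by blast
  qed
  have disj: "A \<inter> A' = {}" if A: "A \<in> part_join M T \<alpha> S" and A': "A' \<in> part_join M T \<alpha> S" and ne: "A \<noteq> A'" for A A'
  proof -
    obtain f where f: "\<forall>i\<in>S. f i \<in> \<alpha>" "A = E f" using A unfolding pjE by auto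
    obtain g where g: "\<forall>i\<in>S. g i \<in> \<alpha>" "A' = E g" using A' unfolding pjE by auto
    have "\<exists>i\<in>S. f i \<noteq> g i"
    proof (rule ccontr)
      assume "\<not> ?thesis"
      hence "E f = E g" unfolding E_def by auto
      thus False using ne f g by simp
    qed
    then obtain i where i: "i \<in> S" "f i \<noteq> g i" by blast
    hence "f i \<inter> g i = {}" using dis f g by auto
    thus ?thesis using f g i unfolding E_def by auto
  qed
  show ?thesis unfolding fin_meas_partition_def
  proof (intro conjI ballI impI)
    show "finite (part_join M T \<alpha> S)" by fact
    show "part_join M T \<alpha> S \<subseteq> sets M" unfolding pjE using meas by auto
    show "\<Union> (part_join M T \<alpha> S) = space M" using cover unfolding pjE E_def by auto
  qed (rule disj)
qed

end


lemma fmp_sets: "fin_meas_partition M \<alpha> \<Longrightarrow> A \<in> \<alpha> \<Longrightarrow> A \<in> sets M"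
  unfolding fin_meas_partition_def by (simp add: subset_iff)
lemma fmp_space: "fin_meas_partition M \<alpha> \<Longrightarrow> A \<in> \<alpha> \<Longrightarrow> A \<subseteq> space M"
  by (rule sets.sets_into_space, rule fmp_sets)

context mpsys begin

lemma pj_space: "A \<in> part_join M T \<gamma> S \<Longrightarrow> A \<subseteq> space M"
  by (elim pj_elem) auto

lemma ent_sub:
  assumes a: "fin_meas_partition M \<alpha>" and S': "finite S'" and sub: "S \<subseteq> S'"
  shows "part_entropy M (part_join M T \<alpha> S) \<le> part_entropy M (part_join M T \<alpha> S')"
proof (rule ent_mono[OF P pj_part[OF a] pj_part[OF a S']])
  show "finite S" using S' sub by (rule finite_subset[rotated])
  show "refines (part_join M T \<alpha> S') (part_join M T \<alpha> S)" unfolding refines_def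
  proof (intro ballI impI subsetI)
    fix C B y assume C: "C \<in> part_join M T \<alpha> S'" and B: "B \<in> part_join M T \<alpha> S" and ne: "B \<inter> C \<noteq> {}" and y: "y \<in> C"
    obtain x where x: "x \<in> B" "x \<in> C" using ne by blast
    show "y \<in> B"
    proof (rule cell[OF a B x(1)])
      show "y \<in> space M" using pj_space[OF C] y by blast
      show "\<forall>i\<in>S. \<exists>B\<in>\<alpha>. (T ^^ i) x \<in> B \<and> (T ^^ i) y \<in> B"
        using same_block[OF C x(2) y] sub by blast
    qed
  qed
qed

lemma ent_union:
  assumes a: "fin_meas_partition M \<alpha>" and S: "finite S" and S': "finite S'"
  shows "part_entropy M (part_join M T \<alpha> (S \<union> S')) \<le> part_entropy M (part_join M T \<alpha> S) + part_entropy M (part_join M T \<alpha> S')"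
proof -
  have pS: "fin_meas_partition M (part_join M T \<alpha> S)" using pj_part[OF a S] .
  have pS': "fin_meas_partition M (part_join M T \<alpha> S')" using pj_part[OF a S'] .
  have "part_entropy M (part_join M T \<alpha> (S \<union> S')) \<le> part_entropy M (pjoin (part_join M T \<alpha> S) (part_join M T \<alpha> S'))"
  proof (rule ent_mono[OF P pj_part[OF a] pjoin_part[OF pS pS']])
    show "finite (S \<union> S')" using S S' by simp
    show "refines (pjoin (part_join M T \<alpha> S) (part_join M T \<alpha> S')) (part_join M T \<alpha> (S \<union> S'))"
      unfolding refines_def
    proof (intro ballI impI subsetI)
      fix D A y assume D: "D \<in> pjoin (part_join M T \<alpha> S) (part_join M T \<alpha> S')"
        and A: "A \<in> part_join M T \<alpha> (S \<union> S')" and ne: "A \<inter> D \<noteq> {}" and y: "y \<in> D"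
      obtain B C where B: "B \<in> part_join M T \<alpha> S" and C: "C \<in> part_join M T \<alpha> S'" and DBC: "D = B \<inter> C"
        using D unfolding pjoin_def by auto
      obtain x where x: "x \<in> A" "x \<in> D" using ne by blast
      show "y \<in> A"
      proof (rule cell[OF a A x(1)])
        show "y \<in> space M" using pj_space[OF B] y DBC by blast
        show "\<forall>i\<in>S \<union> S'. \<exists>B\<in>\<alpha>. (T ^^ i) x \<in> B \<and> (T ^^ i) y \<in> B"
        proof
          fix i assume "i \<in> S \<union> S'"
          thus "\<exists>B\<in>\<alpha>. (T ^^ i) x \<in> B \<and> (T ^^ i) y \<in> B"
          proof
            assume "i \<in> S" thus ?thesis using same_block[OF B _ _ ] x y DBC by blast
          next
            assume "i \<in> S'" thus ?thesis using same_block[OF C _ _ ] x y DBC by blast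
          qed
        qed
      qed
    qed
  qed
  also have "\<dots> \<le> part_entropy M (part_join M T \<alpha> S) + part_entropy M (part_join M T \<alpha> S')"
    by (rule ent_join[OF P pS pS'])
  finally show ?thesis .
qed

lemma pj_shift:
  "part_join M T \<gamma> ((\<lambda>i. i + m) ` S) = (\<lambda>A. (T^^m) -` A \<inter> space M) ` part_join M T \<gamma> S"
proof
  show "part_join M T \<gamma> ((\<lambda>i. i + m) ` S) \<subseteq> (\<lambda>A. (T^^m) -` A \<inter> space M) ` part_join M T \<gamma> S"
  proof
    fix A assume "A \<in> part_join M T \<gamma> ((\<lambda>i. i + m) ` S)"
    then obtain f where f: "\<forall>j\<in>(\<lambda>i. i + m) ` S. f j \<in> \<gamma>" and Af: "A = space M \<inter> (\<Inter>j\<in>(\<lambda>i. i + m) ` S. (T ^^ j) -` f j)"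
      by (rule pj_elem)
    define g where "g i = f (i + m)" for i
    have g: "\<forall>i\<in>S. g i \<in> \<gamma>" using f unfolding g_def by auto
    have "A = (T^^m) -` (space M \<inter> (\<Inter>i\<in>S. (T ^^ i) -` g i)) \<inter> space M"
      unfolding Af g_def using Tsp by (auto simp: funpow_add)
    thus "A \<in> (\<lambda>A. (T^^m) -` A \<inter> space M) ` part_join M T \<gamma> S" using pj_intro[OF g] by blast
  qed
  show "(\<lambda>A. (T^^m) -` A \<inter> space M) ` part_join M T \<gamma> S \<subseteq> part_join M T \<gamma> ((\<lambda>i. i + m) ` S)"
  proof
    fix A assume "A \<in> (\<lambda>A. (T^^m) -` A \<inter> space M) ` part_join M T \<gamma> S"
    then obtain A0 where A0: "A0 \<in> part_join M T \<gamma> S" and AA: "A = (T^^m) -` A0 \<inter> space M" by blast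
    obtain g where g: "\<forall>i\<in>S. g i \<in> \<gamma>" and Ag: "A0 = space M \<inter> (\<Inter>i\<in>S. (T ^^ i) -` g i)"
      using A0 by (rule pj_elem)
    define f where "f j = g (j - m)" for j
    have f: "\<forall>j\<in>(\<lambda>i. i + m) ` S. f j \<in> \<gamma>" using g unfolding f_def by auto
    have "A = space M \<inter> (\<Inter>j\<in>(\<lambda>i. i + m) ` S. (T ^^ j) -` f j)"
      unfolding AA Ag f_def using Tsp by (auto simp: funpow_add)
    thus "A \<in> part_join M T \<gamma> ((\<lambda>i. i + m) ` S)" using pj_intro[OF f] by simp
  qed
qed

lemma ent_image: "inj_on g X \<Longrightarrow> part_entropy M (g ` X) = - (\<Sum>A\<in>X. measure M (g A) * ln (measure M (g A)))"
  unfolding part_entropy_def by (simp add: sum.reindex)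

lemma ent_shift:
  assumes a: "fin_meas_partition M \<alpha>" and S: "finite S"
  shows "part_entropy M (part_join M T \<alpha> ((\<lambda>i. i + m) ` S)) = part_entropy M (part_join M T \<alpha> S)"
proof -
  have pS: "fin_meas_partition M (part_join M T \<alpha> S)" using pj_part[OF a S] .
  have surj: "(T^^m) ` space M = space M" using Tbij[of m] by (simp add: bij_betw_def)
  have inj: "inj_on (\<lambda>A. (T^^m) -` A \<inter> space M) (part_join M T \<alpha> S)"
  proof (rule inj_onI)
    fix A A' assume A: "A \<in> part_join M T \<alpha> S" and A': "A' \<in> part_join M T \<alpha> S"
      and eq: "(T^^m) -` A \<inter> space M = (T^^m) -` A' \<inter> space M"
    have sub: "A \<subseteq> A'" if "A \<subseteq> space M" and "(T^^m) -` A \<inter> space M = (T^^m) -` A' \<inter> space M" for A A'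
    proof
      fix a assume aA: "a \<in> A"
      have "a \<in> (T^^m) ` space M" using surj that(1) aA by auto
      then obtain z where z: "z \<in> space M" "a = (T^^m) z" by (rule imageE)
      have "z \<in> (T^^m) -` A \<inter> space M" using z aA by simp
      hence "z \<in> (T^^m) -` A' \<inter> space M" using that(2) by simp
      thus "a \<in> A'" using z by simp
    qed
    show "A = A'" using sub[OF pj_space[OF A] eq] sub[OF pj_space[OF A'] eq[symmetric]] by (rule subset_antisym)
  qed
  have h1: "part_entropy M (part_join M T \<alpha> ((\<lambda>i. i + m) ` S)) =
     - (\<Sum>A\<in>part_join M T \<alpha> S. measure M ((T^^m) -` A \<inter> space M) * ln (measure M ((T^^m) -` A \<inter> space M)))"
  proof -
    have e1: "part_join M T \<alpha> ((\<lambda>i. i+m)`S) = (\<lambda>A. (T^^m)-`A \<inter> space M) ` part_join M T \<alpha> S"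
      by (rule pj_shift)
    have e2: "part_entropy M ((\<lambda>A. (T^^m)-`A \<inter> space M) ` part_join M T \<alpha> S) = - (\<Sum>A\<in>part_join M T \<alpha> S. measure M ((T^^m)-`A \<inter> space M) * ln (measure M ((T^^m)-`A \<inter> space M)))"
      by (rule ent_image[OF inj])
    show ?thesis unfolding e1 by (rule e2)
  qed
  have h2: "- (\<Sum>A\<in>part_join M T \<alpha> S. measure M ((T^^m) -` A \<inter> space M) * ln (measure M ((T^^m) -` A \<inter> space M))) = part_entropy M (part_join M T \<alpha> S)"
  proof -
    have "measure M ((T^^m) -` A \<inter> space M) = measure M A" if "A \<in> part_join M T \<alpha> S" for A
    proof -
      have "A \<in> sets M" using pS that by (rule fmp_sets)
      thus ?thesis by (rule meas_pres)
    qed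
    thus ?thesis unfolding part_entropy_def by simp
  qed
  show ?thesis using h1 h2 by (rule trans)
qed

lemma pj_empty: "part_join M T \<gamma> {} = {space M}"
  unfolding part_join_def by simp

lemma ent_empty: "part_entropy M (part_join M T \<gamma> {}) = 0"
  unfolding pj_empty part_entropy_def using prob_space.prob_space[OF P] by simp

lemma pj_zero: assumes a: "fin_meas_partition M \<alpha>" shows "part_join M T \<alpha> {0} = \<alpha>"
proof
  have sp: "B \<subseteq> space M" if "B \<in> \<alpha>" for B using a that by (rule fmp_space)
  show "part_join M T \<alpha> {0} \<subseteq> \<alpha>"
  proof
    fix A assume "A \<in> part_join M T \<alpha> {0}"
    then obtain f where f: "\<forall>i\<in>{0}. f i \<in> \<alpha>" "A = space M \<inter> (\<Inter>i\<in>{0}. (T ^^ i) -` f i)" by (rule pj_elem)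
    hence "A = space M \<inter> f 0" by simp
    also have "\<dots> = f 0" using sp f(1) by (simp add: Int_absorb1)
    finally show "A \<in> \<alpha>" using f(1) by simp
  qed
  show "\<alpha> \<subseteq> part_join M T \<alpha> {0}"
  proof
    fix B assume B: "B \<in> \<alpha>"
    have "space M \<inter> (\<Inter>i\<in>{0}. (T ^^ i) -` (\<lambda>_. B) i) \<in> part_join M T \<alpha> {0}" using B by (intro pj_intro) simp
    moreover have "space M \<inter> (\<Inter>i\<in>{0}. (T ^^ i) -` (\<lambda>_. B) i) = B" using sp[OF B] by (simp add: Int_absorb1)
    ultimately show "B \<in> part_join M T \<alpha> {0}" by simp
  qed
qed

lemma ent_single: assumes a: "fin_meas_partition M \<alpha>"
  shows "part_entropy M (part_join M T \<alpha> {i}) = part_entropy M \<alpha>"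
  using ent_shift[OF a, of "{0}" i] pj_zero[OF a] by simp

lemma ent_card: assumes a: "fin_meas_partition M \<alpha>" and A: "finite A"
  shows "part_entropy M (part_join M T \<alpha> A) \<le> card A * part_entropy M \<alpha>"
  using A
proof (induction A rule: finite_induct)
  case empty thus ?case by (simp add: ent_empty)
next
  case (insert i F)
  have "part_entropy M (part_join M T \<alpha> ({i} \<union> F)) \<le> part_entropy M (part_join M T \<alpha> {i}) + part_entropy M (part_join M T \<alpha> F)"
    using insert by (intro ent_union[OF a]) auto
  thus ?case using insert ent_single[OF a, of i] by (simp add: algebra_simps)
qed

lemma ent_beta:
  assumes a: "fin_meas_partition M \<alpha>" and S: "finite S"
  shows "part_entropy M (part_join M T \<alpha> ((\<lambda>(i,j). i + j) ` (S \<times> {..<k})))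
      \<le> part_entropy M (part_join M T (part_join M T \<alpha> {..<k}) S)"
proof -
  let ?\<beta> = "part_join M T \<alpha> {..<k}"
  have b: "fin_meas_partition M ?\<beta>" using pj_part[OF a] by simp
  show ?thesis
  proof (rule ent_mono[OF P pj_part[OF a] pj_part[OF b S]])
    show "finite ((\<lambda>(i,j). i + j) ` (S \<times> {..<k}))" using S by simp
    show "refines (part_join M T ?\<beta> S) (part_join M T \<alpha> ((\<lambda>(i,j). i + j) ` (S \<times> {..<k})))"
      unfolding refines_def
    proof (intro ballI impI subsetI)
      fix C A y assume C: "C \<in> part_join M T ?\<beta> S" and A: "A \<in> part_join M T \<alpha> ((\<lambda>(i,j). i + j) ` (S \<times> {..<k}))"
        and ne: "A \<inter> C \<noteq> {}" and y: "y \<in> C"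
      obtain x where x: "x \<in> A" "x \<in> C" using ne by blast
      show "y \<in> A"
      proof (rule cell[OF a A x(1)])
        show "y \<in> space M" using pj_space[OF C] y by blast
        show "\<forall>m\<in>(\<lambda>(i,j). i + j) ` (S \<times> {..<k}). \<exists>B\<in>\<alpha>. (T ^^ m) x \<in> B \<and> (T ^^ m) y \<in> B"
        proof
          fix m assume "m \<in> (\<lambda>(i,j). i + j) ` (S \<times> {..<k})"
          then obtain i j where ij: "i \<in> S" "j < k" "m = j + i" by auto
          obtain F where F: "F \<in> ?\<beta>" "(T^^i) x \<in> F" "(T^^i) y \<in> F" using same_block[OF C x(2) y ij(1)] by blast
          obtain B where "B \<in> \<alpha>" "(T^^j) ((T^^i) x) \<in> B" "(T^^j) ((T^^i) y) \<in> B"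
            using same_block[OF F(1) F(2) F(3)] ij(2) by blast
          thus "\<exists>B\<in>\<alpha>. (T ^^ m) x \<in> B \<and> (T ^^ m) y \<in> B" unfolding ij(3) funpow_add by auto
        qed
      qed
    qed
  qed
qed

end


definition cseq :: "'a measure \<Rightarrow> ('a \<Rightarrow> 'a) \<Rightarrow> 'a set set \<Rightarrow> nat \<Rightarrow> real" where
  "cseq M T \<alpha> n = (\<Sum>S\<in>Pow {..<n}. (1 / 2 ^ n) * part_entropy M (part_join M T \<alpha> S))"

definition hseq :: "'a measure \<Rightarrow> ('a \<Rightarrow> 'a) \<Rightarrow> 'a set set \<Rightarrow> nat \<Rightarrow> real" where
  "hseq M T \<alpha> n = part_entropy M (part_join M T \<alpha> {..<n})"

lemma split_lessThan: "{..<(m::nat)+n} = {..<m} \<union> (\<lambda>i. i + m) ` {..<n}"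
proof (intro equalityI subsetI)
  fix x assume x: "x \<in> {..<m+n}"
  show "x \<in> {..<m} \<union> (\<lambda>i. i + m) ` {..<n}"
  proof (cases "x < m")
    case False
    hence "x = (x - m) + m" "x - m < n" using x by auto
    hence "x \<in> (\<lambda>i. i + m) ` {..<n}" by (intro image_eqI[of _ _ "x - m"]) auto
    thus ?thesis by simp
  qed simp
qed auto

lemma Pow_split_bij:
  fixes m n :: nat
  shows "bij_betw (\<lambda>(S1,S2). S1 \<union> (\<lambda>i. i + m) ` S2) (Pow {..<m} \<times> Pow {..<n}) (Pow {..<m+n})"
proof (rule bij_betw_byWitness[where f' = "\<lambda>S. (S \<inter> {..<m}, {i. i + m \<in> S})"])
  show "\<forall>a\<in>Pow {..<m} \<times> Pow {..<n}. (\<lambda>S. (S \<inter> {..<m}, {i. i + m \<in> S})) ((\<lambda>(S1,S2). S1 \<union> (\<lambda>i. i + m) ` S2) a) = a"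
  proof
    fix a assume "a \<in> Pow {..<m} \<times> Pow {..<n}"
    then obtain S1 S2 where a: "a = (S1,S2)" "S1 \<subseteq> {..<m}" "S2 \<subseteq> {..<n}" by auto
    have 1: "(S1 \<union> (\<lambda>i. i + m) ` S2) \<inter> {..<m} = S1" using a by auto
    have 2: "{i. i + m \<in> S1 \<union> (\<lambda>i. i + m) ` S2} = S2" using a by auto
    show "(\<lambda>S. (S \<inter> {..<m}, {i. i + m \<in> S})) ((\<lambda>(S1,S2). S1 \<union> (\<lambda>i. i + m) ` S2) a) = a"
      using 1 2 a(1) by simp
  qed
  show "\<forall>a'\<in>Pow {..<m+n}. (\<lambda>(S1,S2). S1 \<union> (\<lambda>i. i + m) ` S2) ((\<lambda>S. (S \<inter> {..<m}, {i. i + m \<in> S})) a') = a'"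
  proof
    fix S assume S: "S \<in> Pow {..<m+n}"
    have "S \<inter> {..<m} \<union> (\<lambda>i. i + m) ` {i. i + m \<in> S} = S"
    proof (intro equalityI subsetI)
      fix x assume x: "x \<in> S"
      show "x \<in> S \<inter> {..<m} \<union> (\<lambda>i. i + m) ` {i. i + m \<in> S}"
      proof (cases "x < m")
        case False
        hence "x = (x - m) + m" by auto
        hence "x \<in> (\<lambda>i. i + m) ` {i. i + m \<in> S}" using x by (intro image_eqI[of _ _ "x - m"]) auto
        thus ?thesis by simp
      qed (use x in simp)
    qed auto
    thus "(\<lambda>(S1,S2). S1 \<union> (\<lambda>i. i + m) ` S2) ((\<lambda>S. (S \<inter> {..<m}, {i. i + m \<in> S})) S) = S" by simp
  qed
  show "(\<lambda>(S1,S2). S1 \<union> (\<lambda>i. i + m) ` S2) ` (Pow {..<m} \<times> Pow {..<n}) \<subseteq> Pow {..<m+n}" by auto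
  show "(\<lambda>S. (S \<inter> {..<m}, {i. i + m \<in> S})) ` Pow {..<m+n} \<subseteq> Pow {..<m} \<times> Pow {..<n}" by auto
qed

context mpsys begin

lemma hseq_sub: assumes a: "fin_meas_partition M \<alpha>"
  shows "hseq M T \<alpha> (m+n) \<le> hseq M T \<alpha> m + hseq M T \<alpha> n"
proof -
  have "hseq M T \<alpha> (m+n) \<le> part_entropy M (part_join M T \<alpha> {..<m}) + part_entropy M (part_join M T \<alpha> ((\<lambda>i. i + m) ` {..<n}))"
    unfolding hseq_def split_lessThan by (rule ent_union[OF a]) auto
  thus ?thesis unfolding hseq_def ent_shift[OF a finite_lessThan] .
qed

lemma hseq_lim: assumes a: "fin_meas_partition M \<alpha>"
  shows "(\<lambda>n. hseq M T \<alpha> n / real n) \<longlonglongrightarrow> ks_entropy_part M T \<alpha>"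
proof -
  have "convergent (\<lambda>n. hseq M T \<alpha> n / real n)"
    by (rule fekete) (auto simp: hseq_def ent_nonneg[OF P] hseq_sub[OF a, unfolded hseq_def])
  hence "(\<lambda>n. hseq M T \<alpha> n / real n) \<longlonglongrightarrow> lim (\<lambda>n. hseq M T \<alpha> n / real n)"
    by (simp only: convergent_LIMSEQ_iff)
  thus ?thesis unfolding ks_entropy_part_def hseq_def .
qed

lemma cseq_nonneg: "0 \<le> cseq M T \<alpha> n"
  unfolding cseq_def by (intro sum_nonneg mult_nonneg_nonneg ent_nonneg[OF P]) auto

lemma cseq_sub: assumes a: "fin_meas_partition M \<alpha>"
  shows "cseq M T \<alpha> (m+n) \<le> cseq M T \<alpha> m + cseq M T \<alpha> n"
proof -
  define h where "h S = part_entropy M (part_join M T \<alpha> S)" for S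
  define w :: real where "w = 1 / 2 ^ (m+n)"
  have "cseq M T \<alpha> (m+n) = (\<Sum>S\<in>Pow {..<m+n}. w * h S)" unfolding cseq_def h_def w_def ..
  also have "\<dots> = (\<Sum>x\<in>Pow {..<m} \<times> Pow {..<n}. w * h ((\<lambda>(S1,S2). S1 \<union> (\<lambda>i. i + m) ` S2) x))"
    by (rule sum.reindex_bij_betw[OF Pow_split_bij, symmetric])
  also have "\<dots> \<le> (\<Sum>x\<in>Pow {..<m} \<times> Pow {..<n}. w * (h (fst x) + h (snd x)))"
  proof (rule sum_mono)
    fix x assume x: "x \<in> Pow {..<m} \<times> Pow {..<n}"
    then obtain S1 S2 where xs: "x = (S1,S2)" "S1 \<subseteq> {..<m}" "S2 \<subseteq> {..<n}" by auto
    have f1: "finite S1" and f2: "finite S2" using xs finite_subset by auto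
    have "h (S1 \<union> (\<lambda>i. i + m) ` S2) \<le> h S1 + h ((\<lambda>i. i + m) ` S2)"
      unfolding h_def using f1 f2 by (intro ent_union[OF a]) auto
    also have "h ((\<lambda>i. i + m) ` S2) = h S2" unfolding h_def by (rule ent_shift[OF a f2])
    finally have "h (S1 \<union> (\<lambda>i. i + m) ` S2) \<le> h S1 + h S2" .
    moreover have "0 \<le> w" unfolding w_def by simp
    ultimately show "w * h ((\<lambda>(S1,S2). S1 \<union> (\<lambda>i. i + m) ` S2) x) \<le> w * (h (fst x) + h (snd x))"
      using xs by (simp add: mult_left_mono)
  qed
  also have "\<dots> = (\<Sum>S1\<in>Pow {..<m}. \<Sum>S2\<in>Pow {..<n}. w * h S1 + w * h S2)"
    by (simp add: sum.cartesian_product distrib_left split_beta)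
  also have "\<dots> = (\<Sum>S1\<in>Pow {..<m}. \<Sum>S2\<in>Pow {..<n}. w * h S1) + (\<Sum>S1\<in>Pow {..<m}. \<Sum>S2\<in>Pow {..<n}. w * h S2)"
    by (simp add: sum.distrib)
  also have "(\<Sum>S1\<in>Pow {..<m}. \<Sum>S2\<in>Pow {..<n}. w * h S1) = cseq M T \<alpha> m"
  proof -
    have "(\<Sum>S2\<in>Pow {..<n}. w * h S1) = (1 / 2^m) * h S1" for S1
      by (simp add: card_Pow w_def power_add)
    thus ?thesis unfolding cseq_def h_def by simp
  qed
  also have "(\<Sum>S1\<in>Pow {..<m}. \<Sum>S2\<in>Pow {..<n}. w * h S2) = cseq M T \<alpha> n"
  proof -
    have "(\<Sum>S1\<in>Pow {..<m}. \<Sum>S2\<in>Pow {..<n}. w * h S2) = 2^m * (\<Sum>S2\<in>Pow {..<n}. w * h S2)"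
      by (simp add: card_Pow)
    also have "\<dots> = (\<Sum>S2\<in>Pow {..<n}. (1 / 2^n) * h S2)"
      by (simp add: sum_distrib_left w_def power_add)
    finally show ?thesis unfolding cseq_def h_def .
  qed
  finally show ?thesis .
qed

lemma cseq_lim: assumes a: "fin_meas_partition M \<alpha>"
  shows "(\<lambda>n. cseq M T \<alpha> n / real n) \<longlonglongrightarrow> Asc M \<alpha> T"
proof -
  have "convergent (\<lambda>n. cseq M T \<alpha> n / real n)"
    by (rule fekete[OF cseq_nonneg cseq_sub[OF a]])
  hence "(\<lambda>n. cseq M T \<alpha> n / real n) \<longlonglongrightarrow> lim (\<lambda>n. cseq M T \<alpha> n / real n)"
    by (simp only: convergent_LIMSEQ_iff)
  moreover have "(\<lambda>n. cseq M T \<alpha> n / real n) = (\<lambda>n. (1 / real n) *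
      (\<Sum>S\<in>Pow {..<n}. (1 / 2 ^ n) * part_entropy M (part_join M T \<alpha> S)))"
    unfolding cseq_def by simp
  ultimately show ?thesis unfolding Asc_def by simp
qed

lemma cseq_le: assumes a: "fin_meas_partition M \<alpha>"
  shows "cseq M T \<alpha> n \<le> hseq M T \<alpha> n"
proof -
  have "cseq M T \<alpha> n \<le> (\<Sum>S\<in>Pow {..<n}. (1 / 2 ^ n) * hseq M T \<alpha> n)"
    unfolding cseq_def hseq_def
    by (intro sum_mono mult_left_mono ent_sub[OF a]) auto
  also have "\<dots> = hseq M T \<alpha> n" by (simp add: card_Pow)
  finally show ?thesis .
qed

end


context mpsys begin

lemma lower: assumes a: "fin_meas_partition M \<alpha>"
  shows "hseq M T \<alpha> n \<le> cseq M T (part_join M T \<alpha> {..<k}) n + part_entropy M \<alpha> * (real k + real n / 2^k)"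
proof -
  let ?\<beta> = "part_join M T \<alpha> {..<k}"
  let ?H = "part_entropy M \<alpha>"
  define PS where "PS S = (\<lambda>(a,b). a + b) ` (S \<times> {..<k})" for S :: "nat set"
  define D where "D S = {..<n} - PS S" for S
  have H0: "0 \<le> ?H" by (rule ent_nonneg[OF P])
  have each: "hseq M T \<alpha> n \<le> part_entropy M (part_join M T ?\<beta> S) + real (card (D S)) * ?H"
    if S: "S \<in> Pow {..<n}" for S
  proof -
    have fS: "finite S" using S finite_subset by auto
    have fP: "finite (PS S)" unfolding PS_def using fS by simp
    have fD: "finite (D S)" unfolding D_def by simp
    have "hseq M T \<alpha> n \<le> part_entropy M (part_join M T \<alpha> (PS S \<union> D S))"
      unfolding hseq_def using fP fD by (intro ent_sub[OF a]) (auto simp: D_def)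
    also have "\<dots> \<le> part_entropy M (part_join M T \<alpha> (PS S)) + part_entropy M (part_join M T \<alpha> (D S))"
      by (rule ent_union[OF a fP fD])
    also have "part_entropy M (part_join M T \<alpha> (PS S)) \<le> part_entropy M (part_join M T ?\<beta> S)"
      unfolding PS_def by (rule ent_beta[OF a fS])
    also have "part_entropy M (part_join M T \<alpha> (D S)) \<le> real (card (D S)) * ?H"
      by (rule ent_card[OF a fD])
    finally show ?thesis by simp
  qed
  have "hseq M T \<alpha> n = (\<Sum>S\<in>Pow {..<n}. (1 / 2^n) * hseq M T \<alpha> n)" by (simp add: card_Pow)
  also have "\<dots> \<le> (\<Sum>S\<in>Pow {..<n}. (1 / 2^n) * (part_entropy M (part_join M T ?\<beta> S) + real (card (D S)) * ?H))"
    using each by (intro sum_mono mult_left_mono) auto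
  also have "\<dots> = cseq M T ?\<beta> n + (1 / 2^n) * ?H * (\<Sum>S\<in>Pow {..<n}. real (card (D S)))"
    unfolding cseq_def by (simp add: distrib_left sum.distrib sum_distrib_left mult.commute sum_divide_distrib)
  also have "\<dots> \<le> cseq M T ?\<beta> n + (1 / 2^n) * ?H * (real k * 2^n + real n * 2^n / 2^k)"
    using count_bound[of n k] H0 unfolding D_def PS_def
    by (intro add_left_mono mult_left_mono) auto
  also have "(1 / 2^n) * ?H * (real k * 2^n + real n * 2^n / 2^k) = ?H * (real k + real n / 2^k)"
    by (simp add: field_simps)
  finally show ?thesis .
qed

lemma asc_lower: assumes a: "fin_meas_partition M \<alpha>"
  shows "ks_entropy_part M T \<alpha> - part_entropy M \<alpha> / 2^k \<le> Asc M (part_join M T \<alpha> {..<k}) T"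
proof -
  let ?\<beta> = "part_join M T \<alpha> {..<k}"
  let ?H = "part_entropy M \<alpha>"
  have b: "fin_meas_partition M ?\<beta>" using pj_part[OF a] by simp
  have X: "(\<lambda>n. hseq M T \<alpha> n / real n - (?H * real k) / real n - ?H / 2^k) \<longlonglongrightarrow> ks_entropy_part M T \<alpha> - 0 - ?H / 2^k"
    by (intro tendsto_diff hseq_lim[OF a] lim_const_over_n tendsto_const)
  show ?thesis
  proof (rule LIMSEQ_le[OF _ cseq_lim[OF b]])
    show "(\<lambda>n. hseq M T \<alpha> n / real n - (?H * real k) / real n - ?H / 2^k) \<longlonglongrightarrow> ks_entropy_part M T \<alpha> - ?H / 2^k"
      using X by simp
    show "\<exists>N. \<forall>n\<ge>N. hseq M T \<alpha> n / real n - (?H * real k) / real n - ?H / 2^k \<le> cseq M T ?\<beta> n / real n"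
    proof (intro exI allI impI)
      fix n :: nat assume n: "n \<ge> 1"
      hence np: "0 < real n" by simp
      have "hseq M T \<alpha> n / real n \<le> (cseq M T ?\<beta> n + ?H * (real k + real n / 2^k)) / real n"
        using lower[OF a, of n k] np by (intro divide_right_mono) auto
      also have "\<dots> = cseq M T ?\<beta> n / real n + (?H * real k) / real n + ?H / 2^k"
        using np by (simp add: field_simps)
      finally show "hseq M T \<alpha> n / real n - (?H * real k) / real n - ?H / 2^k \<le> cseq M T ?\<beta> n / real n"
        by simp
    qed
  qed
qed

lemma asc_le: assumes a: "fin_meas_partition M \<alpha>"
  shows "Asc M \<alpha> T \<le> ks_entropy_part M T \<alpha>"
proof (rule LIMSEQ_le[OF cseq_lim[OF a] hseq_lim[OF a]])
  show "\<exists>N. \<forall>n\<ge>N. cseq M T \<alpha> n / real n \<le> hseq M T \<alpha> n / real n"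
    using cseq_le[OF a] by (intro exI allI impI divide_right_mono) auto
qed

end

theorem theorem5p6:
  assumes "mps M T"
  shows "(SUP \<alpha>\<in>{\<alpha>. fin_meas_partition M \<alpha>}. ereal (Asc M \<alpha> T)) = ks_entropy M T"
proof -
  interpret mpsys M T using assms by unfold_locales
  let ?F = "{\<alpha>. fin_meas_partition M \<alpha>}"
  have ge: "ereal (ks_entropy_part M T \<alpha>) \<le> (SUP \<alpha>\<in>?F. ereal (Asc M \<alpha> T))" if a: "\<alpha> \<in> ?F" for \<alpha>
  proof (rule ereal_le_epsilon2)
    fix e :: real assume e: "0 < e"
    have a': "fin_meas_partition M \<alpha>" using a by simp
    let ?H = "part_entropy M \<alpha>"
    have H0: "0 \<le> ?H" by (rule ent_nonneg[OF P])
    obtain k :: nat where k: "?H / e < 2^k" using real_arch_pow[of 2 "?H / e"] by auto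
    have Hk: "?H / 2^k < e"
    proof -
      have "?H < e * 2^k" using k e by (simp add: field_simps)
      thus ?thesis by (simp add: field_simps)
    qed
    let ?\<beta> = "part_join M T \<alpha> {..<k}"
    have b: "?\<beta> \<in> ?F" using pj_part[OF a'] by simp
    have "ks_entropy_part M T \<alpha> \<le> Asc M ?\<beta> T + e" using asc_lower[OF a', of k] Hk by simp
    hence "ereal (ks_entropy_part M T \<alpha>) \<le> ereal (Asc M ?\<beta> T) + ereal e" by simp
    also have "ereal (Asc M ?\<beta> T) \<le> (SUP \<alpha>\<in>?F. ereal (Asc M \<alpha> T))" using b by (rule SUP_upper)
    finally show "ereal (ks_entropy_part M T \<alpha>) \<le> (SUP \<alpha>\<in>?F. ereal (Asc M \<alpha> T)) + ereal e"
      by (simp add: add_right_mono)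
  qed
  show ?thesis unfolding ks_entropy_def
  proof (rule antisym)
    show "(SUP \<alpha>\<in>?F. ereal (Asc M \<alpha> T)) \<le> (SUP \<alpha>\<in>?F. ereal (ks_entropy_part M T \<alpha>))"
      by (rule SUP_mono) (use asc_le in auto)
    show "(SUP \<alpha>\<in>?F. ereal (ks_entropy_part M T \<alpha>)) \<le> (SUP \<alpha>\<in>?F. ereal (Asc M \<alpha> T))"
      by (rule SUP_least) (rule ge)
  qed
qed

end
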